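(* Let $A$ be a bounded distributive lattice, $X$ its Priestley space, and $\kappa$ a regular cardinal. Then every existing join of fewer than $\kappa$ elements in $A$ is distributive if and only if for each $\kappa$-clopen upset $U$ of $X$ such that ${\sf cl_2}(U)$ is clopen, we have ${\sf cl_2}(U)={\sf cl}(U)$.
   Context: A join $\bigvee S$ is distributive if $a\wedge\bigvee S=\bigvee\{a\wedge s:s\in S\}$ for all $a$. The Priestley space $X$ of $A$ is the set of prime filters ordered by inclusion, with topology generated by $\{\mathfrak s(a)\setminus\mathfrak s(b)\}$, $\mathfrak s(a)=\{x:a\in x\}$; $\mathfrak s$ is an isomorphism of $A$ onto the lattice of clopen upsets. ${\sf cl}$ is topological closure and ${\sf cl_2}(S)={\uparrow}{\sf cl}(S)$ (closure in the topology of open downsets). A $\kappa$-clopen upset is a union of fewer than $\kappa$ clopen upsets. *)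

theory Defs
  imports "HOL-Analysis.Analysis"
begin

definition prime_filter :: "'a::{distrib_lattice,bounded_lattice} set \<Rightarrow> bool" where
  "prime_filter x \<longleftrightarrow> top \<in> x \<and> bot \<notin> x
     \<and> (\<forall>a b. a \<in> x \<longrightarrow> a \<le> b \<longrightarrow> b \<in> x)
     \<and> (\<forall>a b. a \<in> x \<longrightarrow> b \<in> x \<longrightarrow> inf a b \<in> x)
     \<and> (\<forall>a b. sup a b \<in> x \<longrightarrow> a \<in> x \<or> b \<in> x)"

definition pspace :: "'a::{distrib_lattice,bounded_lattice} set set" where
  "pspace = {x. prime_filter x}"

definition stone_map :: "'a::{distrib_lattice,bounded_lattice} \<Rightarrow> 'a set set" ("\<s>") where
  "\<s> a = {x \<in> pspace. a \<in> x}"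

definition priestley_top :: "'a::{distrib_lattice,bounded_lattice} set topology" where
  "priestley_top = topology_generated_by {\<s> a - \<s> b | a b. True}"

definition is_upset :: "'a::{distrib_lattice,bounded_lattice} set set \<Rightarrow> bool" where
  "is_upset U \<longleftrightarrow> U \<subseteq> pspace \<and> (\<forall>x\<in>U. \<forall>y\<in>pspace. x \<subseteq> y \<longrightarrow> y \<in> U)"

definition clopen_upset :: "'a::{distrib_lattice,bounded_lattice} set set \<Rightarrow> bool" where
  "clopen_upset U \<longleftrightarrow> is_upset U \<and> openin priestley_top U \<and> closedin priestley_top U"

definition kappa_clopen_upset :: "'k rel \<Rightarrow> 'a::{distrib_lattice,bounded_lattice} set set \<Rightarrow> bool" where
  "kappa_clopen_upset \<kappa> U \<longleftrightarrow>
     (\<exists>F. (card_of F, \<kappa>) \<in> ordLess \<and> (\<forall>V\<in>F. clopen_upset V) \<and> U = \<Union>F)"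

definition cl :: "'a::{distrib_lattice,bounded_lattice} set set \<Rightarrow> 'a set set" where
  "cl U = priestley_top closure_of U"

definition cl2 :: "'a::{distrib_lattice,bounded_lattice} set set \<Rightarrow> 'a set set" where
  "cl2 U = {y \<in> pspace. \<exists>x\<in>cl U. x \<subseteq> y}"

definition is_join :: "'a::order set \<Rightarrow> 'a \<Rightarrow> bool" where
  "is_join S j \<longleftrightarrow> (\<forall>s\<in>S. s \<le> j) \<and> (\<forall>u. (\<forall>s\<in>S. s \<le> u) \<longrightarrow> j \<le> u)"

definition distributive_join :: "'a::{distrib_lattice,bounded_lattice} set \<Rightarrow> 'a \<Rightarrow> bool" where
  "distributive_join S j \<longleftrightarrow> (\<forall>a. is_join {inf a s | s. s \<in> S} (inf a j))"

end

theory Submission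
  imports Defs
begin


lemma pf_top: "prime_filter x \<Longrightarrow> top \<in> x" by (simp add: prime_filter_def)
lemma pf_bot: "prime_filter x \<Longrightarrow> bot \<notin> x" by (simp add: prime_filter_def)
lemma pf_up: "prime_filter x \<Longrightarrow> a \<in> x \<Longrightarrow> a \<le> b \<Longrightarrow> b \<in> x" by (simp add: prime_filter_def)
lemma pf_inf: "prime_filter x \<Longrightarrow> inf a b \<in> x \<longleftrightarrow> a \<in> x \<and> b \<in> x"
  unfolding prime_filter_def by (metis inf.cobounded1 inf.cobounded2)
lemma pf_sup: "prime_filter x \<Longrightarrow> sup a b \<in> x \<longleftrightarrow> a \<in> x \<or> b \<in> x"
  unfolding prime_filter_def by (metis sup.cobounded1 sup.cobounded2)

lemma s_sub: "\<s> a \<subseteq> pspace" by (auto simp: stone_map_def)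
lemma s_top: "\<s> top = pspace" by (auto simp: stone_map_def pspace_def pf_top)
lemma s_bot: "\<s> bot = {}" by (auto simp: stone_map_def pspace_def pf_bot)
lemma s_inf: "\<s> (inf a b) = \<s> a \<inter> \<s> b" by (auto simp: stone_map_def pspace_def pf_inf)
lemma s_sup: "\<s> (sup a b) = \<s> a \<union> \<s> b" by (auto simp: stone_map_def pspace_def pf_sup)
lemma s_mono: "a \<le> b \<Longrightarrow> \<s> a \<subseteq> \<s> b" by (auto simp: stone_map_def pspace_def intro: pf_up)

lemma topspace_pt: "topspace priestley_top = pspace"
proof -
  have "\<Union>{\<s> a - \<s> b | a b. True} = pspace"
    using s_sub s_top s_bot by fastforce
  then show ?thesis by (simp add: priestley_top_def)
qed

lemma open_gen: "openin priestley_top (\<s> a - \<s> b)"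
  unfolding priestley_top_def openin_topology_generated_by_iff
  by (rule generate_topology_on.Basis) blast

lemma s_open: "openin priestley_top (\<s> a)"
  using open_gen[of a bot] by (simp add: s_bot)

lemma s_closed: "closedin priestley_top (\<s> a)"
  unfolding closedin_def topspace_pt using open_gen[of top a] s_sub by (simp add: s_top)

lemma open_basic:
  assumes "openin priestley_top W" "x \<in> W"
  shows "\<exists>b c. x \<in> \<s> b - \<s> c \<and> \<s> b - \<s> c \<subseteq> W"
proof -
  have "generate_topology_on {\<s> a - \<s> b | a b. True} W"
    using assms(1) unfolding priestley_top_def openin_topology_generated_by_iff .
  then show ?thesis using assms(2)
  proof (induction arbitrary: x)
    case Empty then show ?case by simp
  next
    case (Int a b)
    then obtain b1 c1 b2 c2 where "x \<in> \<s> b1 - \<s> c1" "\<s> b1 - \<s> c1 \<subseteq> a"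
       "x \<in> \<s> b2 - \<s> c2" "\<s> b2 - \<s> c2 \<subseteq> b" by (metis IntE)
    then show ?case
      by (rule_tac x="inf b1 b2" in exI, rule_tac x="sup c1 c2" in exI) (auto simp: s_inf s_sup)
  next
    case (UN K) then show ?case by blast
  next
    case (Basis s) then show ?case by blast
  qed
qed

definition is_filt :: "'a::{distrib_lattice,bounded_lattice} set \<Rightarrow> bool" where
  "is_filt F \<longleftrightarrow> top \<in> F \<and> (\<forall>a b. a \<in> F \<longrightarrow> a \<le> b \<longrightarrow> b \<in> F) \<and> (\<forall>a b. a \<in> F \<longrightarrow> b \<in> F \<longrightarrow> inf a b \<in> F)"
definition is_idl :: "'a::{distrib_lattice,bounded_lattice} set \<Rightarrow> bool" where
  "is_idl I \<longleftrightarrow> bot \<in> I \<and> (\<forall>a b. a \<in> I \<longrightarrow> b \<le> a \<longrightarrow> b \<in> I) \<and> (\<forall>a b. a \<in> I \<longrightarrow> b \<in> I \<longrightarrow> sup a b \<in> I)"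

lemma filt_top: "is_filt F \<Longrightarrow> top \<in> F" by (simp add: is_filt_def)
lemma filt_up: "is_filt F \<Longrightarrow> a \<in> F \<Longrightarrow> a \<le> b \<Longrightarrow> b \<in> F" by (simp add: is_filt_def)
lemma filt_inf: "is_filt F \<Longrightarrow> a \<in> F \<Longrightarrow> b \<in> F \<Longrightarrow> inf a b \<in> F" by (simp add: is_filt_def)
lemma idl_bot: "is_idl I \<Longrightarrow> bot \<in> I" by (simp add: is_idl_def)
lemma idl_down: "is_idl I \<Longrightarrow> a \<in> I \<Longrightarrow> b \<le> a \<Longrightarrow> b \<in> I" by (simp add: is_idl_def)
lemma idl_sup: "is_idl I \<Longrightarrow> a \<in> I \<Longrightarrow> b \<in> I \<Longrightarrow> sup a b \<in> I" by (simp add: is_idl_def)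
lemma is_filtI: "top \<in> F \<Longrightarrow> (\<And>a b. a \<in> F \<Longrightarrow> a \<le> b \<Longrightarrow> b \<in> F) \<Longrightarrow> (\<And>a b. a \<in> F \<Longrightarrow> b \<in> F \<Longrightarrow> inf a b \<in> F) \<Longrightarrow> is_filt F"
  by (simp add: is_filt_def)
lemma is_idlI: "bot \<in> I \<Longrightarrow> (\<And>a b. a \<in> I \<Longrightarrow> b \<le> a \<Longrightarrow> b \<in> I) \<Longrightarrow> (\<And>a b. a \<in> I \<Longrightarrow> b \<in> I \<Longrightarrow> sup a b \<in> I) \<Longrightarrow> is_idl I"
  by (simp add: is_idl_def)

lemma PFT:
  fixes F I :: "'a::{distrib_lattice,bounded_lattice} set"
  assumes F: "is_filt F" and I: "is_idl I" and d: "F \<inter> I = {}"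
  shows "\<exists>x. prime_filter x \<and> F \<subseteq> x \<and> x \<inter> I = {}"
proof -
  define A where "A = {G. is_filt G \<and> F \<subseteq> G \<and> G \<inter> I = {}}"
  have "\<exists>M\<in>A. \<forall>X\<in>A. M \<subseteq> X \<longrightarrow> X = M"
  proof (rule Zorn_Lemma2, intro ballI)
    fix C assume C: "C \<in> chains A"
    show "\<exists>U\<in>A. \<forall>X\<in>C. X \<subseteq> U"
    proof (cases "C = {}")
      case True then show ?thesis using F d by (auto simp: A_def)
    next
      case False
      have CA: "\<And>X. X \<in> C \<Longrightarrow> is_filt X \<and> F \<subseteq> X \<and> X \<inter> I = {}"
        using C by (auto simp: chains_def A_def)
      have ch: "\<And>X Y. X \<in> C \<Longrightarrow> Y \<in> C \<Longrightarrow> X \<subseteq> Y \<or> Y \<subseteq> X"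
        using C by (auto simp: chains_def chain_subset_def)
      have "is_filt (\<Union>C)"
      proof (rule is_filtI)
        obtain X where "X \<in> C" using False by blast
        then show "top \<in> \<Union>C" using CA filt_top by blast
      next
        fix a b assume "a \<in> \<Union>C" "a \<le> b"
        then obtain X where "X \<in> C" "a \<in> X" by auto
        then have "b \<in> X" using CA \<open>a \<le> b\<close> filt_up by blast
        then show "b \<in> \<Union>C" using \<open>X \<in> C\<close> by blast
      next
        fix a b
        assume "a \<in> \<Union>C" "b \<in> \<Union>C"
        then obtain X Y where XY: "X \<in> C" "Y \<in> C" "a \<in> X" "b \<in> Y" by auto
        show "inf a b \<in> \<Union>C"
        proof (cases "X \<subseteq> Y")
          case True
          then have "inf a b \<in> Y" using XY CA filt_inf by blast
          then show ?thesis using XY by blast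
        next
          case False
          then have "Y \<subseteq> X" using ch XY by blast
          then have "inf a b \<in> X" using XY CA filt_inf by blast
          then show ?thesis using XY by blast
        qed
      qed
      moreover have "F \<subseteq> \<Union>C" using False CA by blast
      moreover have "\<Union>C \<inter> I = {}" using CA by blast
      ultimately have "\<Union>C \<in> A" by (simp add: A_def)
      then show ?thesis by blast
    qed
  qed
  then obtain M where MA: "M \<in> A" and Mmax: "\<forall>X\<in>A. M \<subseteq> X \<longrightarrow> X = M" by blast
  have Mf: "is_filt M" and FM: "F \<subseteq> M" and MI: "M \<inter> I = {}" using MA by (auto simp: A_def)
  have key: "\<exists>e\<in>M. inf e c \<in> I" if "c \<notin> M" for c
  proof (rule ccontr)
    assume nk: "\<not> ?thesis"
    define G where "G = {z. \<exists>e\<in>M. inf e c \<le> z}"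
    have "is_filt G"
    proof (rule is_filtI)
      show "top \<in> G" using Mf filt_top unfolding G_def by fastforce
      fix a b
      show "a \<in> G \<Longrightarrow> a \<le> b \<Longrightarrow> b \<in> G" unfolding G_def using order_trans by blast
    next
      fix a b
      assume "a \<in> G" "b \<in> G"
      then obtain e1 e2 where "e1 \<in> M" "e2 \<in> M" "inf e1 c \<le> a" "inf e2 c \<le> b" by (auto simp: G_def)
      moreover have "inf (inf e1 e2) c \<le> inf a b" using calculation
        by (meson inf.bounded_iff inf.cobounded1 inf.cobounded2 order_trans)
      moreover have "inf e1 e2 \<in> M" using calculation Mf filt_inf by blast
      ultimately show "inf a b \<in> G" unfolding G_def by blast
    qed
    moreover have "M \<subseteq> G" unfolding G_def by (auto intro: inf.coboundedI1)
    moreover have "G \<inter> I = {}"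
    proof -
      { fix z assume "z \<in> G" "z \<in> I"
        then obtain e where "e \<in> M" "inf e c \<le> z" by (auto simp: G_def)
        then have "inf e c \<in> I" using I \<open>z \<in> I\<close> idl_down by blast
        with nk \<open>e \<in> M\<close> have False by blast }
      then show ?thesis by blast
    qed
    ultimately have "G = M" using Mmax FM by (auto simp: A_def)
    moreover have "c \<in> G" using Mf filt_top unfolding G_def by fastforce
    ultimately show False using that by blast
  qed
  have "prime_filter M"
    unfolding prime_filter_def
  proof (intro conjI allI impI)
    show "top \<in> M" using Mf by (simp add: is_filt_def)
    show "bot \<notin> M" using I MI by (auto simp: is_idl_def)
    show "\<And>a b. a \<in> M \<Longrightarrow> a \<le> b \<Longrightarrow> b \<in> M" using Mf by (simp add: is_filt_def)
    show "\<And>a b. a \<in> M \<Longrightarrow> b \<in> M \<Longrightarrow> inf a b \<in> M" using Mf by (simp add: is_filt_def)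
    fix c d assume cd: "sup c d \<in> M"
    show "c \<in> M \<or> d \<in> M"
    proof (rule ccontr)
      assume "\<not> (c \<in> M \<or> d \<in> M)"
      then obtain e f where ef: "e \<in> M" "inf e c \<in> I" "f \<in> M" "inf f d \<in> I" using key by blast
      have "inf (inf e f) (sup c d) \<in> M" using Mf ef cd filt_inf by blast
      moreover have "inf (inf e f) (sup c d) \<le> sup (inf e c) (inf f d)"
        by (simp add: inf_sup_distrib1 le_infI1 le_infI2 sup.coboundedI1 sup.coboundedI2 sup_mono)
      moreover have "sup (inf e c) (inf f d) \<in> I" using I ef idl_sup by blast
      ultimately have "inf (inf e f) (sup c d) \<in> I" using I idl_down by blast
      then show False using MI \<open>inf (inf e f) (sup c d) \<in> M\<close> by blast
    qed
  qed
  then show ?thesis using FM MI by blast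
qed

lemma s_le: "\<s> a \<subseteq> \<s> b \<Longrightarrow> a \<le> b"
proof (rule ccontr)
  assume sub: "\<s> a \<subseteq> \<s> b" and n: "\<not> a \<le> b"
  have "is_filt {z. a \<le> z}" by (auto simp: is_filt_def intro: order_trans)
  moreover have "is_idl {z. z \<le> b}" by (auto simp: is_idl_def intro: order_trans)
  moreover have "{z. a \<le> z} \<inter> {z. z \<le> b} = {}" using n order_trans by blast
  ultimately obtain x where x: "prime_filter x" "{z. a \<le> z} \<subseteq> x" "x \<inter> {z. z \<le> b} = {}"
    using PFT by blast
  then have "a \<in> x" "b \<notin> x" by auto
  then show False using sub x(1) by (auto simp: stone_map_def pspace_def)
qed




definition Bsub :: "'a::{distrib_lattice,bounded_lattice} set set set" where
  "Bsub = range \<s> \<union> {pspace - \<s> b | b. True}"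

lemma UBsub: "\<Union>Bsub = pspace"
  unfolding Bsub_def using s_sub s_top by blast

lemma Bsub_open: "S \<in> Bsub \<Longrightarrow> openin priestley_top S"
  unfolding Bsub_def using s_open open_gen[of top] by (auto simp: s_top)

lemma eqtop: "topology (arbitrary union_of (finite intersection_of (\<lambda>x. x \<in> Bsub) relative_to \<Union>Bsub)) = priestley_top"
  (is "?X = _")
proof -
  have incl: "openin ?X S" if "S \<in> Bsub" for S
  proof -
    have "S \<subseteq> pspace" using that UBsub by blast
    have "(finite intersection_of (\<lambda>x. x \<in> Bsub) relative_to \<Union>Bsub) (\<Union>Bsub \<inter> S)"
      by (rule relative_to_inc, rule finite_intersection_of_inc) (use that in simp)
    then have "openin ?X (\<Union>Bsub \<inter> S)"
      by (simp add: openin_subbase arbitrary_union_of_inc)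
    moreover have eq: "\<Union>Bsub \<inter> S = S" using \<open>S \<subseteq> pspace\<close> UBsub by blast
    ultimately show ?thesis by (simp only: eq)
  qed
  show ?thesis
  unfolding topology_eq
  proof (intro allI iffI)
    fix S assume "openin ?X S"
    moreover have "openin priestley_top (\<Union>Bsub)" by (simp add: UBsub topspace_pt[symmetric])
    ultimately show "openin priestley_top S"
      using minimal_topology_subbase[of "\<lambda>x. x \<in> Bsub" priestley_top "\<Union>Bsub" S] Bsub_open by blast
  next
    fix S :: "'a set set" assume "openin priestley_top S"
    then have g: "generate_topology_on {\<s> a - \<s> b | a b. True} S"
      unfolding priestley_top_def openin_topology_generated_by_iff .
    show "openin ?X S"
    proof (rule generate_topology_on_coarsest[OF _ _ g])
      show "istopology (openin ?X)" by simp
      fix T :: "'a set set" assume "T \<in> {\<s> a - \<s> b | a b. True}"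
      then obtain a b :: 'a where T: "T = \<s> a \<inter> (pspace - \<s> b)" using s_sub by blast
      have "openin ?X (\<s> a)" by (rule incl) (simp add: Bsub_def)
      moreover have "openin ?X (pspace - \<s> b)" by (rule incl) (auto simp: Bsub_def)
      ultimately show "openin ?X T" using T by (simp add: openin_Int)
    qed
  qed
qed

inductive_set fgen :: "'a::{distrib_lattice,bounded_lattice} set \<Rightarrow> 'a set" for J where
  "top \<in> fgen J"
| "b \<in> J \<Longrightarrow> b \<in> fgen J"
| "a \<in> fgen J \<Longrightarrow> b \<in> fgen J \<Longrightarrow> inf a b \<in> fgen J"
| "a \<in> fgen J \<Longrightarrow> a \<le> b \<Longrightarrow> b \<in> fgen J"

inductive_set igen :: "'a::{distrib_lattice,bounded_lattice} set \<Rightarrow> 'a set" for J where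
  "bot \<in> igen J"
| "b \<in> J \<Longrightarrow> b \<in> igen J"
| "a \<in> igen J \<Longrightarrow> b \<in> igen J \<Longrightarrow> sup a b \<in> igen J"
| "a \<in> igen J \<Longrightarrow> b \<le> a \<Longrightarrow> b \<in> igen J"

lemma fgen_filt: "is_filt (fgen J)"
  by (rule is_filtI[OF fgen.intros(1) fgen.intros(4) fgen.intros(3)])
lemma igen_idl: "is_idl (igen J)"
  by (rule is_idlI[OF igen.intros(1) igen.intros(4) igen.intros(3)])

lemma fgen_fin: "z \<in> fgen J \<Longrightarrow> \<exists>J0. finite J0 \<and> J0 \<subseteq> J \<and> (\<forall>x\<in>pspace. J0 \<subseteq> x \<longrightarrow> z \<in> x)"
proof (induction rule: fgen.induct)
  case 1 then show ?case by (auto simp: pspace_def pf_top)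
next
  case (2 b) then show ?case by (rule_tac x="{b}" in exI) auto
next
  case (3 a b)
  then obtain A B where "finite A" "A \<subseteq> J" "\<forall>x\<in>pspace. A \<subseteq> x \<longrightarrow> a \<in> x"
    "finite B" "B \<subseteq> J" "\<forall>x\<in>pspace. B \<subseteq> x \<longrightarrow> b \<in> x" by blast
  then show ?case by (rule_tac x="A \<union> B" in exI) (auto simp: pspace_def pf_inf)
next
  case (4 a b)
  then obtain A where "finite A" "A \<subseteq> J" "\<forall>x\<in>pspace. A \<subseteq> x \<longrightarrow> a \<in> x" by blast
  moreover have "\<forall>x\<in>pspace. a \<in> x \<longrightarrow> b \<in> x" using 4(2) by (metis pf_up pspace_def mem_Collect_eq)
  ultimately show ?case by blast
qed

lemma igen_fin: "z \<in> igen J \<Longrightarrow> \<exists>J0. finite J0 \<and> J0 \<subseteq> J \<and> (\<forall>x\<in>pspace. z \<in> x \<longrightarrow> (\<exists>i\<in>J0. i \<in> x))"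
proof (induction rule: igen.induct)
  case 1 then show ?case by (auto simp: pspace_def pf_bot)
next
  case (2 b) then show ?case by (rule_tac x="{b}" in exI) auto
next
  case (3 a b)
  then obtain A B where "finite A" "A \<subseteq> J" "\<forall>x\<in>pspace. a \<in> x \<longrightarrow> (\<exists>i\<in>A. i \<in> x)"
    "finite B" "B \<subseteq> J" "\<forall>x\<in>pspace. b \<in> x \<longrightarrow> (\<exists>i\<in>B. i \<in> x)" by blast
  then show ?case by (rule_tac x="A \<union> B" in exI) (auto simp: pspace_def pf_sup)
next
  case (4 a b)
  then obtain A where "finite A" "A \<subseteq> J" "\<forall>x\<in>pspace. a \<in> x \<longrightarrow> (\<exists>i\<in>A. i \<in> x)" by blast
  moreover have "\<forall>x\<in>pspace. b \<in> x \<longrightarrow> a \<in> x" using 4(2) by (metis pf_up pspace_def mem_Collect_eq)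
  ultimately show ?case by blast
qed

lemma compact_pt: "compact_space (priestley_top :: 'a::{distrib_lattice,bounded_lattice} set topology)"
proof (rule Alexander_subbase[OF eqtop])
  fix C :: "'a set set set" assume CB: "C \<subseteq> Bsub" and CU: "\<Union>C = topspace priestley_top"
  define IA where "IA = {a. \<s> a \<in> C}"
  define JB where "JB = {b. pspace - \<s> b \<in> C}"
  show "\<exists>C'. finite C' \<and> C' \<subseteq> C \<and> \<Union>C' = topspace priestley_top"
  proof (cases "fgen JB \<inter> igen IA = {}")
    case True
    then obtain x where x: "prime_filter x" "fgen JB \<subseteq> x" "x \<inter> igen IA = {}"
      using PFT[OF fgen_filt igen_idl] by blast
    then have "x \<in> pspace" by (simp add: pspace_def)
    then have "x \<in> \<Union>C" by (simp add: CU topspace_pt)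
    then obtain T where "T \<in> C" "x \<in> T" by blast
    then have "T \<in> Bsub" using CB by blast
    then have "T \<in> range \<s> \<or> T \<in> {pspace - \<s> b | b. True}" by (simp add: Bsub_def)
    then consider a where "T = \<s> a" | b where "T = pspace - \<s> b" by blast
    then have False
    proof cases
      case 1
      then have "a \<in> igen IA" using \<open>T \<in> C\<close> by (auto simp: IA_def intro: igen.intros(2))
      moreover have "a \<in> x" using 1 \<open>x \<in> T\<close> by (simp add: stone_map_def)
      ultimately show False using x by blast
    next
      case 2
      then have "b \<in> fgen JB" using \<open>T \<in> C\<close> by (auto simp: JB_def intro: fgen.intros(2))
      moreover have "b \<notin> x" using 2 \<open>x \<in> T\<close> x(1) by (simp add: stone_map_def pspace_def)
      ultimately show False using x by blast
    qed
    then show ?thesis ..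
  next
    case False
    then obtain z where z: "z \<in> fgen JB" "z \<in> igen IA" by blast
    obtain J0 where J0c: "finite J0 \<and> J0 \<subseteq> JB \<and> (\<forall>x\<in>pspace. J0 \<subseteq> x \<longrightarrow> z \<in> x)"
      using fgen_fin[OF z(1)] by (elim exE)
    then have J0: "finite J0" "J0 \<subseteq> JB" "\<forall>x\<in>pspace. J0 \<subseteq> x \<longrightarrow> z \<in> x" by simp_all
    obtain I0 where I0c: "finite I0 \<and> I0 \<subseteq> IA \<and> (\<forall>x\<in>pspace. z \<in> x \<longrightarrow> (\<exists>i\<in>I0. i \<in> x))"
      using igen_fin[OF z(2)] by (elim exE)
    then have I0: "finite I0" "I0 \<subseteq> IA" "\<forall>x\<in>pspace. z \<in> x \<longrightarrow> (\<exists>i\<in>I0. i \<in> x)" by simp_all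
    define C' where "C' = \<s> ` I0 \<union> (\<lambda>b. pspace - \<s> b) ` J0"
    have f: "finite C'" using J0 I0 by (simp add: C'_def)
    have s1: "\<s> ` I0 \<subseteq> C" using I0(2) by (auto simp: IA_def)
    have s2: "(\<lambda>b. pspace - \<s> b) ` J0 \<subseteq> C" using J0(2) by (auto simp: JB_def)
    have sC: "C' \<subseteq> C" unfolding C'_def using s1 s2 by (rule Un_least)
    have u1: "\<Union>C' \<subseteq> pspace" using s_sub by (auto simp: C'_def)
    have u2: "pspace \<subseteq> \<Union>C'"
    proof
      fix x :: "'a set" assume xp: "x \<in> pspace"
      show "x \<in> \<Union>C'"
      proof (cases "J0 \<subseteq> x")
        case True
        then have "z \<in> x" using J0(3) xp by blast
        then obtain i where "i \<in> I0" "i \<in> x" using I0(3) xp by blast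
        then have "x \<in> \<s> i" using xp by (simp add: stone_map_def)
        then show ?thesis using \<open>i \<in> I0\<close> by (auto simp: C'_def)
      next
        case False
        then obtain j where "j \<in> J0" "j \<notin> x" by blast
        then have "x \<in> pspace - \<s> j" using xp by (simp add: stone_map_def)
        then show ?thesis using \<open>j \<in> J0\<close> by (auto simp: C'_def)
      qed
    qed
    have "\<Union>C' = pspace" using u1 u2 by (rule antisym)
    with f sC show ?thesis by (intro exI[of _ C']) (simp add: topspace_pt)
  qed
qed




lemma cover_join:
  fixes D :: "'a::{distrib_lattice,bounded_lattice} set"
  assumes K: "compactin priestley_top K" and sub: "K \<subseteq> \<Union>(\<s> ` D)"
    and bot: "bot \<in> D" and sup: "\<And>a b. a \<in> D \<Longrightarrow> b \<in> D \<Longrightarrow> sup a b \<in> D"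
  shows "\<exists>d\<in>D. K \<subseteq> \<s> d"
proof -
  have "\<forall>B\<in>\<s> ` D. openin priestley_top B" using s_open by blast
  then have "\<exists>F. finite F \<and> F \<subseteq> \<s> ` D \<and> K \<subseteq> \<Union>F"
    using K sub unfolding compactin_def by blast
  then obtain F where F: "finite F" "F \<subseteq> \<s> ` D" "K \<subseteq> \<Union>F" by blast
  obtain D0 where D0: "D0 \<subseteq> D" "finite D0" "F = \<s> ` D0"
    using finite_subset_image[OF F(1) F(2)] by blast
  have "finite D0 \<Longrightarrow> D0 \<subseteq> D \<Longrightarrow> \<exists>d\<in>D. \<Union>(\<s> ` D0) \<subseteq> \<s> d" for D0
  proof (induction D0 rule: finite_induct)
    case empty then show ?case using bot by blast
  next
    case (insert a D1)
    then obtain d where d: "d \<in> D" "\<Union>(\<s> ` D1) \<subseteq> \<s> d" by blast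
    have "a \<in> D" using insert by blast
    then have m: "sup a d \<in> D" using d(1) by (rule sup)
    have "\<Union>(\<s> ` insert a D1) \<subseteq> \<s> (sup a d)"
      using d(2) by (auto simp: s_sup)
    then show ?case using m by blast
  qed
  then obtain d where "d \<in> D" "\<Union>(\<s> ` D0) \<subseteq> \<s> d" using D0(1,2) by blast
  then show ?thesis using D0(3) F(3) by blast
qed

lemma cover_meet:
  fixes D :: "'a::{distrib_lattice,bounded_lattice} set"
  assumes K: "compactin priestley_top K" and sub: "K \<subseteq> \<Union>((\<lambda>d. pspace - \<s> d) ` D)"
    and top: "top \<in> D" and inf: "\<And>a b. a \<in> D \<Longrightarrow> b \<in> D \<Longrightarrow> inf a b \<in> D"
  shows "\<exists>d\<in>D. K \<subseteq> pspace - \<s> d"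
proof -
  have "\<forall>B\<in>(\<lambda>d. pspace - \<s> d) ` D. openin priestley_top B" using open_gen[of "top::'a"] by (simp add: s_top)
  then have "\<exists>F. finite F \<and> F \<subseteq> (\<lambda>d. pspace - \<s> d) ` D \<and> K \<subseteq> \<Union>F"
    using K sub unfolding compactin_def by blast
  then obtain F where F: "finite F" "F \<subseteq> (\<lambda>d. pspace - \<s> d) ` D" "K \<subseteq> \<Union>F" by blast
  obtain D0 where D0: "D0 \<subseteq> D" "finite D0" "F = (\<lambda>d. pspace - \<s> d) ` D0"
    using finite_subset_image[OF F(1) F(2)] by blast
  have "finite D0 \<Longrightarrow> D0 \<subseteq> D \<Longrightarrow> \<exists>d\<in>D. \<Union>((\<lambda>d. pspace - \<s> d) ` D0) \<subseteq> pspace - \<s> d" for D0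
  proof (induction D0 rule: finite_induct)
    case empty then show ?case using top by blast
  next
    case (insert a D1)
    then obtain d where d: "d \<in> D" "\<Union>((\<lambda>d. pspace - \<s> d) ` D1) \<subseteq> pspace - \<s> d" by blast
    have "a \<in> D" using insert by blast
    then have m: "inf a d \<in> D" using d(1) by (rule inf)
    have "\<Union>((\<lambda>d. pspace - \<s> d) ` insert a D1) \<subseteq> pspace - \<s> (inf a d)"
      using d(2) by (auto simp: s_inf)
    then show ?case using m by blast
  qed
  then obtain d where "d \<in> D" "\<Union>((\<lambda>d. pspace - \<s> d) ` D0) \<subseteq> pspace - \<s> d" using D0(1,2) by blast
  then show ?thesis using D0(3) F(3) by blast
qed

lemma compact_closed: "closedin priestley_top K \<Longrightarrow> compactin priestley_top K"
  using closedin_compact_space compact_pt by blast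

lemma clopen_rep:
  fixes V :: "'a::{distrib_lattice,bounded_lattice} set set"
  assumes V: "clopen_upset V"
  shows "\<exists>a. V = \<s> a"
proof -
  have up: "is_upset V" and op: "openin priestley_top V" and cl: "closedin priestley_top V"
    using V by (auto simp: clopen_upset_def)
  have Vp: "V \<subseteq> pspace" using up by (simp add: is_upset_def)
  have cy: "\<exists>c. c \<notin> y \<and> V \<subseteq> \<s> c" if y: "y \<in> pspace - V" for y
  proof -
    have pf: "prime_filter y" using y by (simp add: pspace_def)
    have "V \<subseteq> \<Union>(\<s> ` {c. c \<notin> y})"
    proof
      fix x assume "x \<in> V"
      then have "\<not> x \<subseteq> y" using up y unfolding is_upset_def by blast
      then obtain c where "c \<in> x" "c \<notin> y" by blast
      then show "x \<in> \<Union>(\<s> ` {c. c \<notin> y})" using \<open>x \<in> V\<close> Vp by (auto simp: stone_map_def)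
    qed
    moreover have "\<And>a b. a \<in> {c. c \<notin> y} \<Longrightarrow> b \<in> {c. c \<notin> y} \<Longrightarrow> sup a b \<in> {c. c \<notin> y}"
      using pf pf_sup by blast
    moreover have "bot \<in> {c. c \<notin> y}" using pf pf_bot by blast
    ultimately have "\<exists>d\<in>{c. c \<notin> y}. V \<subseteq> \<s> d"
      by (intro cover_join[OF compact_closed[OF cl]]) auto
    then show ?thesis by blast
  qed
  have dd: "pspace - (pspace - V) = V" using Vp by blast
  have "closedin priestley_top (pspace - V)"
    unfolding closedin_def topspace_pt using op by (simp add: dd)
  then have K: "compactin priestley_top (pspace - V)" by (rule compact_closed)
  have "pspace - V \<subseteq> \<Union>((\<lambda>d. pspace - \<s> d) ` {c. V \<subseteq> \<s> c})"
  proof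
    fix y assume y: "y \<in> pspace - V"
    then obtain c where "c \<notin> y" "V \<subseteq> \<s> c" using cy by blast
    then show "y \<in> \<Union>((\<lambda>d. pspace - \<s> d) ` {c. V \<subseteq> \<s> c})" using y by (auto simp: stone_map_def)
  qed
  moreover have "top \<in> {c. V \<subseteq> \<s> c}" using Vp by (simp add: s_top)
  moreover have "\<And>a b. a \<in> {c. V \<subseteq> \<s> c} \<Longrightarrow> b \<in> {c. V \<subseteq> \<s> c} \<Longrightarrow> inf a b \<in> {c. V \<subseteq> \<s> c}"
    by (simp add: s_inf)
  ultimately have "\<exists>d\<in>{c. V \<subseteq> \<s> c}. pspace - V \<subseteq> pspace - \<s> d"
    by (intro cover_meet[OF K]) auto
  then obtain d where "V \<subseteq> \<s> d" "pspace - V \<subseteq> pspace - \<s> d" by blast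
  then have "V = \<s> d" using Vp s_sub[of d] by blast
  then show ?thesis ..
qed

lemma s_clopen_upset: "clopen_upset (\<s> a)"
  unfolding clopen_upset_def is_upset_def using s_sub s_open s_closed
  by (auto simp: stone_map_def)




context
  fixes dummy :: "'a::{distrib_lattice,bounded_lattice}"
begin

lemma cl_sub: "cl (U :: 'a set set) \<subseteq> pspace"
  unfolding cl_def using closure_of_subset_topspace[of priestley_top U] by (simp add: topspace_pt)

lemma U_cl: "(U :: 'a set set) \<subseteq> pspace \<Longrightarrow> U \<subseteq> cl U"
  unfolding cl_def by (rule closure_of_subset) (simp add: topspace_pt)

lemma cl_cl2: "cl (U :: 'a set set) \<subseteq> cl2 U"
  unfolding cl2_def using cl_sub by blast

lemma cl2_upset: "is_upset (cl2 (U :: 'a set set))"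
  unfolding is_upset_def cl2_def by (blast intro: order_trans)

lemma cl_in_s: "(U :: 'a set set) \<subseteq> \<s> u \<Longrightarrow> cl U \<subseteq> \<s> u"
  unfolding cl_def by (rule closure_of_minimal) (simp_all add: s_closed)

lemma cl2_in_s: "(U :: 'a set set) \<subseteq> \<s> u \<Longrightarrow> cl2 U \<subseteq> \<s> u"
proof
  fix y assume "U \<subseteq> \<s> u" "y \<in> cl2 U"
  then obtain x where "x \<in> cl U" "x \<subseteq> y" "y \<in> pspace" by (auto simp: cl2_def)
  then have "u \<in> x" using cl_in_s[OF \<open>U \<subseteq> \<s> u\<close>] by (auto simp: stone_map_def)
  then show "y \<in> \<s> u" using \<open>x \<subseteq> y\<close> \<open>y \<in> pspace\<close> by (auto simp: stone_map_def)
qed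

lemma UsS: "\<Union>(\<s> ` (S :: 'a set)) \<subseteq> pspace" using s_sub by blast

lemma cl2_eq_s:
  assumes J: "is_join (S :: 'a set) j"
  shows "cl2 (\<Union>(\<s> ` S)) = \<s> j"
proof
  have "\<Union>(\<s> ` S) \<subseteq> \<s> j" using J s_mono unfolding is_join_def by blast
  then show "cl2 (\<Union>(\<s> ` S)) \<subseteq> \<s> j" by (rule cl2_in_s)
next
  show "\<s> j \<subseteq> cl2 (\<Union>(\<s> ` S))"
  proof (rule ccontr)
    assume "\<not> ?thesis"
    then obtain y where y: "y \<in> \<s> j" "y \<notin> cl2 (\<Union>(\<s> ` S))" by blast
    have yp: "y \<in> pspace" and jy: "j \<in> y" using y(1) by (auto simp: stone_map_def)
    have pf: "prime_filter y" using yp by (simp add: pspace_def)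
    have cov: "cl (\<Union>(\<s> ` S)) \<subseteq> \<Union>(\<s> ` {c. c \<notin> y})"
    proof
      fix x assume x: "x \<in> cl (\<Union>(\<s> ` S))"
      then have xp: "x \<in> pspace" using cl_sub by blast
      have "\<not> x \<subseteq> y" using x y(2) yp by (auto simp: cl2_def)
      then obtain c where "c \<in> x" "c \<notin> y" by blast
      then show "x \<in> \<Union>(\<s> ` {c. c \<notin> y})" using xp by (auto simp: stone_map_def)
    qed
    have K: "compactin priestley_top (cl (\<Union>(\<s> ` S)))"
      unfolding cl_def by (rule compact_closed) simp
    have "\<exists>c\<in>{c. c \<notin> y}. cl (\<Union>(\<s> ` S)) \<subseteq> \<s> c"
    proof (rule cover_join[OF K cov])
      show "bot \<in> {c. c \<notin> y}" using pf pf_bot by blast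
      show "\<And>a b. a \<in> {c. c \<notin> y} \<Longrightarrow> b \<in> {c. c \<notin> y} \<Longrightarrow> sup a b \<in> {c. c \<notin> y}"
        using pf pf_sup by blast
    qed
    then obtain c where c: "c \<notin> y" "cl (\<Union>(\<s> ` S)) \<subseteq> \<s> c" by blast
    then have "\<Union>(\<s> ` S) \<subseteq> \<s> c" using U_cl[OF UsS] by blast
    then have "\<forall>t\<in>S. t \<le> c" using s_le by blast
    then have "j \<le> c" using J unfolding is_join_def by blast
    then have "c \<in> y" using pf jy pf_up by blast
    then show False using c by blast
  qed
qed

lemma dist_imp:
  assumes J: "is_join (S :: 'a set) j" and Dj: "distributive_join S j" and y: "y \<in> \<s> j"
  shows "y \<in> cl (\<Union>(\<s> ` S))"
proof (rule ccontr)
  assume ny: "y \<notin> cl (\<Union>(\<s> ` S))"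
  have yp: "y \<in> pspace" using y by (simp add: stone_map_def)
  then obtain T where T: "y \<in> T" "openin priestley_top T" "\<forall>x. x \<in> \<Union>(\<s> ` S) \<longrightarrow> x \<notin> T"
    using ny unfolding cl_def in_closure_of topspace_pt by blast
  then obtain b c where bc: "y \<in> \<s> b - \<s> c" "\<s> b - \<s> c \<subseteq> T" using open_basic by blast
  have "inf b t \<le> c" if t: "t \<in> S" for t
  proof (rule s_le)
    show "\<s> (inf b t) \<subseteq> \<s> c"
    proof
      fix x assume "x \<in> \<s> (inf b t)"
      then have "x \<in> \<s> b" "x \<in> \<s> t" by (auto simp: s_inf)
      then have "x \<notin> T" using T(3) t by blast
      then show "x \<in> \<s> c" using \<open>x \<in> \<s> b\<close> bc(2) by blast
    qed
  qed
  then have "inf b j \<le> c" using Dj unfolding distributive_join_def is_join_def by blast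
  then have "\<s> (inf b j) \<subseteq> \<s> c" by (rule s_mono)
  moreover have "y \<in> \<s> (inf b j)" using bc y by (simp add: s_inf)
  ultimately show False using bc by blast
qed

lemma imp_dist:
  assumes J: "is_join (S :: 'a set) j" and eq: "\<s> j = cl (\<Union>(\<s> ` S))"
  shows "distributive_join S j"
  unfolding distributive_join_def is_join_def
proof (intro allI conjI impI)
  fix a
  show "\<forall>s\<in>{inf a s |s. s \<in> S}. s \<le> inf a j"
    using J unfolding is_join_def by (auto intro: le_infI2)
next
    fix a u assume ub: "\<forall>s\<in>{inf a s |s. s \<in> S}. s \<le> u"
    show "inf a j \<le> u"
    proof (rule s_le, rule subsetI)
      fix x assume x0: "x \<in> \<s> (inf a j)"
      show "x \<in> \<s> u"
      proof (rule ccontr)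
      assume "x \<notin> \<s> u"
      note x = x0 this
      then have "x \<in> cl (\<Union>(\<s> ` S))" "x \<in> \<s> a - \<s> u" using eq by (auto simp: s_inf)
      then obtain z where z: "z \<in> \<Union>(\<s> ` S)" "z \<in> \<s> a - \<s> u"
        unfolding cl_def in_closure_of using open_gen by blast
      then obtain t where t: "t \<in> S" "z \<in> \<s> t" by blast
      have "inf a t \<le> u" using ub t(1) by blast
      then have "\<s> (inf a t) \<subseteq> \<s> u" by (rule s_mono)
      moreover have "z \<in> \<s> (inf a t)" using z t by (simp add: s_inf)
      ultimately show False using z by blast
      qed
    qed
qed

end




theorem theorem5p17:
  fixes \<kappa> :: "'k rel"
  assumes "Cinfinite \<kappa>" and "regularCard \<kappa>"
  shows "(\<forall>(S::'a::{distrib_lattice,bounded_lattice} set) j.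
            (card_of S, \<kappa>) \<in> ordLess \<longrightarrow> is_join S j \<longrightarrow> distributive_join S j)
     \<longleftrightarrow> (\<forall>U::'a set set. kappa_clopen_upset \<kappa> U
            \<longrightarrow> openin priestley_top (cl2 U) \<longrightarrow> closedin priestley_top (cl2 U)
            \<longrightarrow> cl2 U = cl U)"
proof
  assume L: "\<forall>(S::'a set) j. (card_of S, \<kappa>) \<in> ordLess \<longrightarrow> is_join S j \<longrightarrow> distributive_join S j"
  show "\<forall>U::'a set set. kappa_clopen_upset \<kappa> U
            \<longrightarrow> openin priestley_top (cl2 U) \<longrightarrow> closedin priestley_top (cl2 U)
            \<longrightarrow> cl2 U = cl U"
  proof (intro allI impI)
    fix U :: "'a set set"
    assume kc: "kappa_clopen_upset \<kappa> U" and op: "openin priestley_top (cl2 U)"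
      and clo: "closedin priestley_top (cl2 U)"
    obtain F where F: "(card_of F, \<kappa>) \<in> ordLess" "\<forall>V\<in>F. clopen_upset V" "U = \<Union>F"
      using kc unfolding kappa_clopen_upset_def by blast
    define g where "g V = (SOME a. V = \<s> a)" for V :: "'a set set"
    have gV: "V = \<s> (g V)" if "V \<in> F" for V
    proof -
      have "\<exists>a. V = \<s> a" using clopen_rep[of V] F(2) that by blast
      then show ?thesis unfolding g_def by (rule someI_ex)
    qed
    define S where "S = g ` F"
    have cS: "(card_of S, \<kappa>) \<in> ordLess"
      unfolding S_def using card_of_image[of g F] F(1) by (rule ordLeq_ordLess_trans)
    have US: "U = \<Union>(\<s> ` S)" unfolding S_def F(3) using gV by auto
    have "clopen_upset (cl2 U)" unfolding clopen_upset_def using cl2_upset op clo by blast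
    then obtain j where j: "cl2 U = \<s> j" using clopen_rep by blast
    have Up: "U \<subseteq> pspace" using US s_sub by blast
    have J: "is_join S j"
      unfolding is_join_def
    proof (intro conjI allI impI ballI)
      fix t assume "t \<in> S"
      then have "\<s> t \<subseteq> U" using US by blast
      also have "\<dots> \<subseteq> cl U" using U_cl[OF Up] .
      also have "\<dots> \<subseteq> cl2 U" by (rule cl_cl2)
      finally have "\<s> t \<subseteq> \<s> j" using j by simp
      then show "t \<le> j" by (rule s_le)
    next
      fix u assume "\<forall>s\<in>S. s \<le> u"
      then have "U \<subseteq> \<s> u" using US s_mono by blast
      then have "cl2 U \<subseteq> \<s> u" by (rule cl2_in_s)
      then have "\<s> j \<subseteq> \<s> u" using j by simp
      then show "j \<le> u" by (rule s_le)
    qed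
    have Dj: "distributive_join S j" using L cS J by simp
    show "cl2 U = cl U"
    proof
      show "cl U \<subseteq> cl2 U" by (rule cl_cl2)
      show "cl2 U \<subseteq> cl U"
      proof
        fix y assume "y \<in> cl2 U"
        then have "y \<in> \<s> j" using j by simp
        then have "y \<in> cl (\<Union>(\<s> ` S))" by (rule dist_imp[OF J Dj])
        then show "y \<in> cl U" using US by simp
      qed
    qed
  qed
next
  assume R: "\<forall>U::'a set set. kappa_clopen_upset \<kappa> U
            \<longrightarrow> openin priestley_top (cl2 U) \<longrightarrow> closedin priestley_top (cl2 U)
            \<longrightarrow> cl2 U = cl U"
  show "\<forall>(S::'a set) j. (card_of S, \<kappa>) \<in> ordLess \<longrightarrow> is_join S j \<longrightarrow> distributive_join S j"
  proof (intro allI impI)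
    fix S :: "'a set" and j
    assume cS: "(card_of S, \<kappa>) \<in> ordLess" and J: "is_join S j"
    have kc: "kappa_clopen_upset \<kappa> (\<Union>(\<s> ` S))"
      unfolding kappa_clopen_upset_def
    proof (intro exI conjI)
      show "(card_of (\<s> ` S), \<kappa>) \<in> ordLess"
        using card_of_image[of \<s> S] cS by (rule ordLeq_ordLess_trans)
      show "\<forall>V\<in>\<s> ` S. clopen_upset V" using s_clopen_upset by blast
    qed (rule refl)
    have e: "cl2 (\<Union>(\<s> ` S)) = \<s> j" by (rule cl2_eq_s[OF J])
    have "cl2 (\<Union>(\<s> ` S)) = cl (\<Union>(\<s> ` S))"
      by (rule R[rule_format, OF kc]) (simp_all only: e s_open s_closed)
    then have "\<s> j = cl (\<Union>(\<s> ` S))" using e by simp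
    then show "distributive_join S j" by (rule imp_dist[OF J])
  qed
qed


end
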